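(* Let $\pi$ be an $(m,n)$-parking function with bird's eye permutation $\omega$. Then $\pi\circ\omega$ is the shifted parent map of a priority forest on $[n]_0$ with $m$ edges.
   Context: $[n]=\{1,\dots,n\}$, $[n]_0=\{0,\dots,n\}$. An $(m,n)$-parking function is a map $\pi:[m]\to[n]$ such that when cars $1,\dots,m$ arrive in this order to a street with spots $1,\dots,n$, and car $i$ parks at the first empty spot $\ge\pi(i)$, all $m$ cars park. Its bird's eye permutation $\omega:[n]\to[m]$ is the partial permutation sending each occupied spot to the car parked there (undefined at empty spots); $\pi\circ\omega$ is the partial function $[n]\to[n]$ defined on occupied spots. A priority forest on $[n]_0$ is a rooted forest with vertex set $[n]_0$ whose component trees $T_0,T_1,\dots$ are increasing (each non-root vertex has a larger label than its parent) and satisfy: for $j<k$ every label of $T_j$ is smaller than every label of $T_k$. Its shifted parent map is the partial function $s_P:[n]\to[n]$ given by $s_P(i)=p(i)+1$ for each non-root vertex $i$ with parent $p(i)$, and undefined at roots. *)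

theory Defs
  imports Main
begin

text \<open>Spots are 1..n, cars are 1..m; a preference map is a function nat => nat
 (only its values on 1..m matter).\<close>

definition can_park :: "nat \<Rightarrow> nat set \<Rightarrow> nat \<Rightarrow> bool" where
  "can_park n S a \<longleftrightarrow> (\<exists>s. a \<le> s \<and> s \<le> n \<and> s \<notin> S)"

definition park_spot :: "nat \<Rightarrow> nat set \<Rightarrow> nat \<Rightarrow> nat" where
  "park_spot n S a = (LEAST s. a \<le> s \<and> s \<le> n \<and> s \<notin> S)"

fun occupied :: "nat \<Rightarrow> (nat \<Rightarrow> nat) \<Rightarrow> nat \<Rightarrow> nat set" where
  "occupied n p 0 = {}"
| "occupied n p (Suc k) =
     (if can_park n (occupied n p k) (p (Suc k))
      then insert (park_spot n (occupied n p k) (p (Suc k))) (occupied n p k)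
      else occupied n p k)"

definition car_spot :: "nat \<Rightarrow> (nat \<Rightarrow> nat) \<Rightarrow> nat \<Rightarrow> nat" where
  "car_spot n p i = park_spot n (occupied n p (i - 1)) (p i)"

definition parking_function :: "nat \<Rightarrow> nat \<Rightarrow> (nat \<Rightarrow> nat) \<Rightarrow> bool" where
  "parking_function m n p \<longleftrightarrow>
     (\<forall>i\<in>{1..m}. p i \<in> {1..n}) \<and>
     (\<forall>i\<in>{1..m}. can_park n (occupied n p (i - 1)) (p i))"

text \<open>Bird's eye permutation as a partial map [n] -> [m].\<close>
definition birds_eye :: "nat \<Rightarrow> nat \<Rightarrow> (nat \<Rightarrow> nat) \<Rightarrow> nat \<Rightarrow> nat option" where
  "birds_eye m n p s =
     (if s \<in> {1..n} \<and> (\<exists>i\<in>{1..m}. car_spot n p i = s)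
      then Some (THE i. i \<in> {1..m} \<and> car_spot n p i = s) else None)"

text \<open>A rooted forest on {0..n} is given by its parent map par (None at roots
 and outside {0..n}).\<close>

definition parent_rel :: "(nat \<Rightarrow> nat option) \<Rightarrow> (nat \<times> nat) set" where
  "parent_rel par = {(i, q). par i = Some q}"

definition tree_of :: "nat \<Rightarrow> (nat \<Rightarrow> nat option) \<Rightarrow> nat \<Rightarrow> nat set" where
  "tree_of n par x = {y \<in> {0..n}. \<exists>r. (x, r) \<in> (parent_rel par)\<^sup>* \<and> (y, r) \<in> (parent_rel par)\<^sup>*}"

definition priority_forest :: "nat \<Rightarrow> (nat \<Rightarrow> nat option) \<Rightarrow> bool" where
  "priority_forest n par \<longleftrightarrow>
     (\<forall>i. par i \<noteq> None \<longrightarrow> i \<le> n) \<and>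
     (\<forall>i q. par i = Some q \<longrightarrow> q < i) \<and>
     (\<forall>x\<in>{0..n}. \<forall>y\<in>{0..n}. tree_of n par x \<noteq> tree_of n par y \<longrightarrow>
        (\<forall>u\<in>tree_of n par x. \<forall>v\<in>tree_of n par y. u < v) \<or>
        (\<forall>u\<in>tree_of n par x. \<forall>v\<in>tree_of n par y. v < u))"

definition num_edges :: "(nat \<Rightarrow> nat option) \<Rightarrow> nat" where
  "num_edges par = card {i. par i \<noteq> None}"

definition shifted_parent :: "nat \<Rightarrow> (nat \<Rightarrow> nat option) \<Rightarrow> nat \<Rightarrow> nat option" where
  "shifted_parent n par i = (if i \<in> {1..n} then map_option Suc (par i) else None)"

end

theory Submission
  imports Defs
begin

lemma spot_props:
  assumes pf: "parking_function m n p" and i: "i \<in> {1..m}"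
  shows "p i \<le> car_spot n p i \<and> car_spot n p i \<le> n \<and> car_spot n p i \<notin> occupied n p (i - 1)"
proof -
  have "can_park n (occupied n p (i - 1)) (p i)" using pf i unfolding parking_function_def by blast
  then obtain s where "p i \<le> s \<and> s \<le> n \<and> s \<notin> occupied n p (i - 1)" unfolding can_park_def by blast
  from LeastI[of "\<lambda>s. p i \<le> s \<and> s \<le> n \<and> s \<notin> occupied n p (i - 1)", OF this]
  show ?thesis unfolding car_spot_def park_spot_def by blast
qed

lemma spot_pos:
  assumes pf: "parking_function m n p" and i: "i \<in> {1..m}"
  shows "1 \<le> p i"
  using pf i unfolding parking_function_def by auto

lemma gap:
  assumes pf: "parking_function m n p" and i: "i \<in> {1..m}" and t: "p i \<le> t" "t < car_spot n p i"
  shows "t \<in> occupied n p (i - 1)"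
proof (rule ccontr)
  assume "t \<notin> occupied n p (i - 1)"
  moreover have "t \<le> n" using spot_props[OF pf i] t by auto
  ultimately have "car_spot n p i \<le> t" unfolding car_spot_def park_spot_def
    using t by (intro Least_le) auto
  then show False using t by auto
qed

lemma occ_car:
  assumes pf: "parking_function m n p"
  shows "k \<le> m \<Longrightarrow> occupied n p k = car_spot n p ` {1..k}"
proof (induction k)
  case 0 then show ?case by simp
next
  case (Suc k)
  have "can_park n (occupied n p k) (p (Suc k))" using pf Suc.prems unfolding parking_function_def by force
  then have "occupied n p (Suc k) = insert (car_spot n p (Suc k)) (occupied n p k)"
    by (simp add: car_spot_def)
  also have "\<dots> = car_spot n p ` {1..Suc k}" using Suc by (auto simp: atLeastAtMostSuc_conv)
  finally show ?case .
qed

lemma car_inj: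
  assumes pf: "parking_function m n p"
  shows "inj_on (car_spot n p) {1..m}"
proof -
  have *: "car_spot n p i \<noteq> car_spot n p j" if "i < j" "i \<in> {1..m}" "j \<in> {1..m}" for i j
  proof -
    have "car_spot n p i \<in> occupied n p (j - 1)" using occ_car[OF pf, of "j-1"] that by auto
    then show ?thesis using spot_props[OF pf that(3)] by auto
  qed
  show ?thesis unfolding inj_on_def by (metis * linorder_neqE_nat)
qed

theorem lemma4p1:
  fixes m n :: nat and p :: "nat \<Rightarrow> nat" and \<omega> :: "nat \<Rightarrow> nat option"
  assumes "parking_function m n p"
    and "\<omega> = birds_eye m n p"
  shows "\<exists>par. priority_forest n par \<and> num_edges par = m \<and>
           shifted_parent n par = (\<lambda>s. map_option p (\<omega> s))"
proof -
  note pf = assms(1)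
  define c where "c = car_spot n p"
  define Occ where "Occ = c ` {1..m}"
  have inj: "inj_on c {1..m}" using car_inj[OF pf] c_def by simp
  have cprops: "p i \<le> c i \<and> c i \<le> n \<and> 1 \<le> p i" if "i \<in> {1..m}" for i
    using spot_props[OF pf that] spot_pos[OF pf that] c_def by auto
  have om1: "\<omega> (c i) = Some i" if i: "i \<in> {1..m}" for i
  proof -
    have "(THE j. j \<in> {1..m} \<and> car_spot n p j = c i) = i"
      using i inj unfolding c_def inj_on_def by blast
    moreover have "c i \<in> {1..n}" using cprops[OF i] by auto
    ultimately show ?thesis using i unfolding assms(2) birds_eye_def c_def by auto
  qed
  have om2: "\<omega> s = None" if "s \<notin> Occ" for s
    using that unfolding assms(2) birds_eye_def Occ_def c_def by auto
  have om3: "\<omega> s = None" if "s \<notin> {1..n}" for s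
    using that unfolding assms(2) birds_eye_def by auto
  define par where "par = (\<lambda>s. map_option (\<lambda>i. p i - 1) (\<omega> s))"
  have parN: "par s = None \<longleftrightarrow> s \<notin> Occ" for s
    unfolding par_def Occ_def using om1 om2[unfolded Occ_def] by fastforce
  have Osub: "Occ \<subseteq> {1..n}" unfolding Occ_def using cprops by fastforce
  have parS: "q < s \<and> (\<forall>z. z \<le> s \<and> z \<notin> Occ \<longrightarrow> z \<le> q)" if "par s = Some q" for s q
  proof -
    have "s \<in> Occ" using parN[of s] that by auto
    then obtain i where i: "i \<in> {1..m}" "s = c i" unfolding Occ_def by auto
    then have q: "q = p i - 1" using that om1 unfolding par_def by auto
    have "q < s" using cprops[OF i(1)] i q by auto
    moreover have "z \<le> q" if z: "z \<le> s" "z \<notin> Occ" for z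
    proof (rule ccontr)
      assume "\<not> z \<le> q"
      then have "p i \<le> z" using q by auto
      moreover have "z \<noteq> s" using z \<open>s \<in> Occ\<close> by auto
      ultimately have "z \<in> occupied n p (i - 1)" using gap[OF pf i(1)] z i c_def by auto
      also have "\<dots> = c ` {1..i-1}" using occ_car[OF pf, of "i-1"] i c_def by auto
      also have "\<dots> \<subseteq> Occ" unfolding Occ_def using i by auto
      finally show False using z by auto
    qed
    ultimately show ?thesis by auto
  qed
  have O0: "0 \<notin> Occ" using Osub by auto
  define root where "root y = Max {z. z \<le> y \<and> z \<notin> Occ}" for y
  have fin: "finite {z. z \<le> y \<and> z \<notin> Occ}" for y by simp
  have ne: "0 \<in> {z. z \<le> y \<and> z \<notin> Occ}" for y using O0 by simp
  have root_in: "root y \<in> {z. z \<le> y \<and> z \<notin> Occ}" for y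
    unfolding root_def using fin ne by (intro Max_in) auto
  have root_self: "root y = y" if "y \<notin> Occ" for y
    unfolding root_def using that fin by (intro Max_eqI) auto
  have root_mono: "root u \<le> root v" if "u \<le> v" for u v
    unfolding root_def using that fin ne by (intro Max_mono) auto
  have root_par: "root q = root s" if "par s = Some q" for s q
  proof -
    have "{z. z \<le> q \<and> z \<notin> Occ} = {z. z \<le> s \<and> z \<notin> Occ}" using parS[OF that] by auto
    then show ?thesis unfolding root_def by simp
  qed
  define R where "R = parent_rel par"
  have reach: "(y, root y) \<in> R\<^sup>*" for y
  proof (induction y rule: less_induct)
    case (less y)
    show ?case
    proof (cases "y \<in> Occ")
      case False then show ?thesis using root_self by simp
    next
      case True
      then obtain q where q: "par y = Some q" using parN by (cases "par y") auto
      then have "(y, q) \<in> R" unfolding R_def parent_rel_def by simp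
      moreover have "(q, root q) \<in> R\<^sup>*" using less parS[OF q] by auto
      ultimately show ?thesis using root_par[OF q] by simp
    qed
  qed
  have inv: "root z = root y" if "(y, z) \<in> R\<^sup>*" for y z
    using that
  proof (induction rule: rtrancl_induct)
    case base then show ?case by simp
  next
    case (step b c')
    then have "par b = Some c'" unfolding R_def parent_rel_def by simp
    then show ?case using root_par step by metis
  qed
  have termr: "r = root y" if "(root y, r) \<in> R\<^sup>*" for y r
  proof -
    have "par (root y) = None" using parN root_in by auto
    then have "\<forall>z. (root y, z) \<notin> R" unfolding R_def parent_rel_def by simp
    then show ?thesis using that by (metis converse_rtranclE)
  qed
  have tree: "tree_of n par x = {y\<in>{0..n}. root y = root x}" for x
    unfolding tree_of_def R_def[symmetric]
  proof (intro Collect_cong conj_cong refl iffI)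
    fix y assume "\<exists>r. (x, r) \<in> R\<^sup>* \<and> (y, r) \<in> R\<^sup>*"
    then show "root y = root x" using inv by metis
  next
    fix y assume "root y = root x"
    then show "\<exists>r. (x, r) \<in> R\<^sup>* \<and> (y, r) \<in> R\<^sup>*" using reach by metis
  qed
  have pf1: "priority_forest n par"
    unfolding priority_forest_def
  proof (intro conjI allI impI ballI)
    fix i assume "par i \<noteq> None"
    then show "i \<le> n" using parN Osub by auto
  next
    fix i q assume "par i = Some q" then show "q < i" using parS by auto
  next
    fix x y assume "x \<in> {0..n}" "y \<in> {0..n}" "tree_of n par x \<noteq> tree_of n par y"
    then have ne: "root x \<noteq> root y" unfolding tree by auto
    show "(\<forall>u\<in>tree_of n par x. \<forall>v\<in>tree_of n par y. u < v) \<or>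
        (\<forall>u\<in>tree_of n par x. \<forall>v\<in>tree_of n par y. v < u)"
    proof (cases "root x < root y")
      case True
      then show ?thesis unfolding tree using root_mono by (metis (mono_tags, lifting) mem_Collect_eq not_le)
    next
      case False
      then have "root y < root x" using ne by auto
      then show ?thesis unfolding tree using root_mono by (metis (mono_tags, lifting) mem_Collect_eq not_le)
    qed
  qed
  have "{i. par i \<noteq> None} = Occ" using parN by auto
  then have ne: "num_edges par = m" unfolding num_edges_def Occ_def
    using card_image[OF inj] by simp
  have sp: "shifted_parent n par = (\<lambda>s. map_option p (\<omega> s))"
  proof
    fix s
    show "shifted_parent n par s = map_option p (\<omega> s)"
    proof (cases "s \<in> Occ")
      case False then show ?thesis unfolding shifted_parent_def par_def using om2 by simp
    next
      case True
      then obtain i where i: "i \<in> {1..m}" "s = c i" unfolding Occ_def by auto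
      then show ?thesis unfolding shifted_parent_def par_def using om1[OF i(1)] cprops[OF i(1)] Osub True
        by auto
    qed
  qed
  show ?thesis using pf1 ne sp by blast
qed

end
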